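(* Assume Assumptions 1 and let $s\in(0,1/2)$. Let $\{f_\alpha:\alpha\in\mathcal J\}\subset C(\overline{\mathbb C^+})$ be bounded and uniformly equicontinuous (for every $\delta>0$ there is $\delta'>0$ such that $|f_\alpha(w)-f_\alpha(w')|<\delta$ for all $\alpha$ whenever $w,w'\in\mathbb C^+\cup\mathbb R$, $|w-w'|<\delta'$). Then the family $\{T_{\kappa,E,s}f_\alpha:\kappa\ge0,\ E\in\mathbb R,\ \alpha\in\mathcal J\}$ is bounded and uniformly equicontinuous in the same sense.
   Context: Assumptions 1: $\nu$ has bounded density (also $\nu$) supported in $[-K,K]$, $K<\infty$; $\sigma$ is a probability measure on $\mathbb R^2$ supported in $[-1,1]^2$. $\overline{\mathbb C^+}=\mathbb C^+\cup\mathbb R\cup\{i\infty\}$, $C(\overline{\mathbb C^+})$ the continuous complex functions on $\mathbb C^+\cup\mathbb R$ with a finite limit at infinity, sup-norm. For $\kappa\ge0$, $\mu$ is the law of $q=(r+\kappa p_0,r+\kappa p_1)$ with $r\sim\nu$, $(p_0,p_1)\sim\sigma$ independent. For $E\in\mathbb R$, $\phi^\pm_{E,q}(w)=\tfrac12\big(\frac{-1}{w+(E-q_0)/\sqrt2}\pm\frac{-1}{w+(E-q_1)/\sqrt2}\big)$, $\phi^\pm_{E,q}(i\infty)=0$, and $(T_{\kappa,E,s}f)(w)=\int f(\phi^+_{E,q}(w))\big(|\phi^+_{E,q}(w)|^s+|\phi^-_{E,q}(w)|^s\big)d\mu(q)$, $(T_{\kappa,E,s}f)(i\infty)=0$. 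*)

theory Defs
  imports "HOL-Probability.Probability"
begin

text \<open>Closed upper half-plane (finite part): C^+ union R.\<close>
definition cuhp :: "complex set" where
  "cuhp = {z. Im z \<ge> 0}"

definition phi_plus :: "real \<Rightarrow> real \<times> real \<Rightarrow> complex \<Rightarrow> complex" where
  "phi_plus E q w = (1/2) * ((-1) / (w + complex_of_real ((E - fst q) / sqrt 2))
                          + (-1) / (w + complex_of_real ((E - snd q) / sqrt 2)))"

definition phi_minus :: "real \<Rightarrow> real \<times> real \<Rightarrow> complex \<Rightarrow> complex" where
  "phi_minus E q w = (1/2) * ((-1) / (w + complex_of_real ((E - fst q) / sqrt 2))
                          - (-1) / (w + complex_of_real ((E - snd q) / sqrt 2)))"

definition mu_law :: "(real \<Rightarrow> real) \<Rightarrow> (real \<times> real) measure \<Rightarrow> real \<Rightarrow> (real \<times> real) measure" where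
  "mu_law g \<sigma> \<kappa> = distr (density lborel (\<lambda>r. ennreal (g r)) \<Otimes>\<^sub>M \<sigma>) borel
      (\<lambda>(r, p). (r + \<kappa> * fst p, r + \<kappa> * snd p))"

text \<open>The operator T_{kappa,E,s} on the finite points w (the value at i infinity is 0).\<close>
definition T_op :: "(real \<Rightarrow> real) \<Rightarrow> (real \<times> real) measure \<Rightarrow> real \<Rightarrow> real \<Rightarrow> real
                    \<Rightarrow> (complex \<Rightarrow> complex) \<Rightarrow> complex \<Rightarrow> complex" where
  "T_op g \<sigma> \<kappa> E s f w =
     (LINT q|mu_law g \<sigma> \<kappa>. f (phi_plus E q w) *
        complex_of_real (cmod (phi_plus E q w) powr s + cmod (phi_minus E q w) powr s))"

definition in_C_cuhp :: "(complex \<Rightarrow> complex) \<Rightarrow> bool" where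
  "in_C_cuhp f \<longleftrightarrow> continuous_on cuhp f \<and> (\<exists>L. (f \<longlongrightarrow> L) (inf at_infinity (principal cuhp)))"

end

theory Submission
  imports Defs
begin


definition Hc :: "real \<Rightarrow> real \<Rightarrow> complex \<Rightarrow> ennreal" where
  "Hc s \<rho> y = (if cmod y < \<rho> then (if y = 0 then \<infinity> else ennreal (cmod y powr -s)) else 0)"

lemma Hc_meas[measurable]: "Hc s \<rho> \<in> borel_measurable borel"
  unfolding Hc_def by measurable

lemma Hc_Re: assumes "0 < s" shows "Hc s \<rho> y \<le> Hc s \<rho> (of_real (Re y))"
proof -
  have a: "\<bar>Re y\<bar> \<le> cmod y" by (rule abs_Re_le_cmod)
  show ?thesis
  proof (cases "cmod y < \<rho>")
    case True
    then have b: "\<bar>Re y\<bar> < \<rho>" using a by linarith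
    show ?thesis
    proof (cases "Re y = 0")
      case True then show ?thesis using b by (simp add: Hc_def)
    next
      case False
      then have "y \<noteq> 0" by auto
      moreover have "cmod y powr -s \<le> \<bar>Re y\<bar> powr -s"
        using a False assms by (intro powr_mono2') auto
      ultimately show ?thesis using b True False by (simp add: Hc_def)
    qed
  qed (simp add: Hc_def)
qed

lemma int_K:
  fixes s \<rho> :: real assumes s: "0<s" "s<1" and r: "0<\<rho>"
  shows "(\<integral>\<^sup>+x. Hc s \<rho> (of_real x) \<partial>lborel) \<le> ennreal (2 * (\<rho> powr (1-s) / (1-s)))"
proof -
  define P where "P x = ennreal (indicator {0..\<rho>} x * x powr (-s))" for x :: real
  have P: "integral\<^sup>N lborel P = \<rho> powr (1-s) / (1-s)"
    unfolding P_def
    using nn_integral_has_integral_lebesgue[of "{0..\<rho>}" "\<lambda>x. x powr (-s)", OF _ has_integral_powr_from_0[of "-s" \<rho>]]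
      s r by simp
  have Pm[measurable]: "P \<in> borel_measurable borel" unfolding P_def by measurable
  have P2: "(\<integral>\<^sup>+x. P (-x) \<partial>lborel) = integral\<^sup>N lborel P"
    using nn_integral_real_affine[OF Pm, of "-1" 0] by simp
  have "(\<integral>\<^sup>+x. Hc s \<rho> (of_real x) \<partial>lborel) \<le> (\<integral>\<^sup>+x. P x + P (-x) \<partial>lborel)"
  proof (rule nn_integral_mono_AE)
    show "AE x in lborel. Hc s \<rho> (complex_of_real x) \<le> P x + P (- x)"
      using AE_lborel_singleton[of 0]
    proof eventually_elim
      case (elim x)
      show ?case
      proof (cases "\<bar>x\<bar> < \<rho>")
        case True
        show ?thesis
        proof (cases "x > 0")
          case True
          then show ?thesis using \<open>\<bar>x\<bar> < \<rho>\<close> by (simp add: Hc_def P_def)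
        next
          case False
          then have "x < 0" using elim by auto
          then show ?thesis using \<open>\<bar>x\<bar> < \<rho>\<close> by (simp add: Hc_def P_def)
        qed
      qed (simp add: Hc_def)
    qed
  qed
  also have "\<dots> = integral\<^sup>N lborel P + (\<integral>\<^sup>+x. P (-x) \<partial>lborel)"
    by (rule nn_integral_add) auto
  also have "\<dots> = ennreal (2 * (\<rho> powr (1-s) / (1-s)))"
    using P2 P s r by (simp flip: ennreal_plus)
  finally show ?thesis .
qed

lemma key:
  fixes g :: "real \<Rightarrow> real" and \<sigma> :: "(real \<times> real) measure"
    and sel :: "real \<times> real \<Rightarrow> real"
  assumes g_meas: "g \<in> borel_measurable borel"
    and g_nonneg: "\<And>x. g x \<ge> 0"
    and g_le: "\<And>x. g x \<le> Mg"
    and nu_prob: "prob_space (density lborel (\<lambda>r. ennreal (g r)))"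
    and sigma_prob: "prob_space \<sigma>"
    and sigma_sets: "sets \<sigma> = sets (borel :: (real \<times> real) measure)"
    and s: "0 < s" "s < 1" and r: "0 < \<rho>"
    and sel_m: "sel \<in> borel_measurable borel"
    and sel_eq: "\<And>r p. sel (r + \<kappa> * fst p, r + \<kappa> * snd p) = r + \<kappa> * sel p"
  shows "(\<integral>\<^sup>+q. Hc s \<rho> (c + of_real ((E - sel q) / sqrt 2)) \<partial>mu_law g \<sigma> \<kappa>)
          \<le> ennreal (Mg * sqrt 2 * (2 * (\<rho> powr (1-s) / (1-s))))"
proof -
  define N where "N = density lborel (\<lambda>r. ennreal (g r))"
  define \<Phi> where "\<Phi> = (\<lambda>(r::real, p::real\<times>real). (r + \<kappa> * fst p, r + \<kappa> * snd p))"
  define C where "C = Mg * sqrt 2 * (2 * (\<rho> powr (1-s) / (1-s)))"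
  have Mg: "0 \<le> Mg" using g_le[of 0] g_nonneg[of 0] by linarith
  have sN: "sets (N \<Otimes>\<^sub>M \<sigma>) = sets (borel \<Otimes>\<^sub>M (borel :: (real\<times>real) measure))"
    by (rule sets_pair_measure_cong) (auto simp: N_def sigma_sets)
  have [measurable]: "sel \<in> borel_measurable borel" by (rule sel_m)
  have [measurable]: "g \<in> borel_measurable borel" by (rule g_meas)
  have \<Phi>m: "\<Phi> \<in> measurable (N \<Otimes>\<^sub>M \<sigma>) borel"
    unfolding measurable_cong_sets[OF sN refl] \<Phi>_def borel_prod
    by (intro borel_measurable_continuous_onI) (auto simp: case_prod_beta intro!: continuous_intros)
  define G where "G q = Hc s \<rho> (c + of_real ((E - sel q) / sqrt 2))" for q
  have Gm[measurable]: "G \<in> borel_measurable borel" unfolding G_def by measurable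
  interpret N: prob_space N using nu_prob by (simp add: N_def)
  interpret S: prob_space \<sigma> by (rule sigma_prob)
  interpret P: pair_sigma_finite N \<sigma> ..
  have GPm: "(\<lambda>x. G (\<Phi> x)) \<in> borel_measurable (N \<Otimes>\<^sub>M \<sigma>)"
    using \<Phi>m by measurable
  have "(\<integral>\<^sup>+q. G q \<partial>mu_law g \<sigma> \<kappa>) = (\<integral>\<^sup>+x. G (\<Phi> x) \<partial>(N \<Otimes>\<^sub>M \<sigma>))"
    unfolding mu_law_def N_def[symmetric] \<Phi>_def[symmetric]
    by (rule nn_integral_distr[OF \<Phi>m]) simp
  also have "\<dots> = (\<integral>\<^sup>+p. (\<integral>\<^sup>+r. G (\<Phi> (r,p)) \<partial>N) \<partial>\<sigma>)"
    by (rule P.nn_integral_snd[OF GPm, symmetric])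
  also have "\<dots> \<le> (\<integral>\<^sup>+p. ennreal C \<partial>\<sigma>)"
  proof (rule nn_integral_mono)
    fix p :: "real \<times> real"
    define c' where "c' = c + of_real ((E - \<kappa> * sel p) / sqrt 2)"
    define t where "t = Re c'"
    define K where "K x = Hc s \<rho> (of_real x)" for x
    have Km[measurable]: "K \<in> borel_measurable borel" unfolding K_def by measurable
    have eq: "G (\<Phi> (r,p)) = Hc s \<rho> (c' - of_real (r / sqrt 2))" for r
      unfolding G_def \<Phi>_def c'_def using sel_eq[of r p]
      by (simp add: diff_divide_distrib add_divide_distrib algebra_simps)
    have "(\<integral>\<^sup>+r. G (\<Phi> (r,p)) \<partial>N) = (\<integral>\<^sup>+r. ennreal (g r) * Hc s \<rho> (c' - of_real (r / sqrt 2)) \<partial>lborel)"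
      unfolding N_def eq by (subst nn_integral_density) auto
    also have "\<dots> \<le> (\<integral>\<^sup>+r. ennreal Mg * K (t + (- 1 / sqrt 2) * r) \<partial>lborel)"
    proof (rule nn_integral_mono)
      fix r
      have "Hc s \<rho> (c' - of_real (r / sqrt 2)) \<le> Hc s \<rho> (of_real (Re (c' - of_real (r / sqrt 2))))"
        by (rule Hc_Re[OF s(1)])
      also have "\<dots> = K (t + (- 1 / sqrt 2) * r)" unfolding K_def t_def by simp
      finally show "ennreal (g r) * Hc s \<rho> (c' - of_real (r / sqrt 2)) \<le> ennreal Mg * K (t + (- 1 / sqrt 2) * r)"
        by (intro mult_mono) (auto intro: ennreal_leI g_le)
    qed
    also have "\<dots> = ennreal Mg * (\<integral>\<^sup>+r. K (t + (- 1 / sqrt 2) * r) \<partial>lborel)"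
      by (rule nn_integral_cmult) measurable
    also have "(\<integral>\<^sup>+r. K (t + (- 1 / sqrt 2) * r) \<partial>lborel) = ennreal (sqrt 2) * (\<integral>\<^sup>+x. K x \<partial>lborel)"
    proof -
      have "(\<integral>\<^sup>+x. K x \<partial>lborel) = ennreal (1 / sqrt 2) * (\<integral>\<^sup>+r. K (t + (- 1 / sqrt 2) * r) \<partial>lborel)"
        using nn_integral_real_affine[OF Km, of "- 1 / sqrt 2" t] by simp
      then have "ennreal (sqrt 2) * (\<integral>\<^sup>+x. K x \<partial>lborel) = (ennreal (sqrt 2) * ennreal (1 / sqrt 2)) * (\<integral>\<^sup>+r. K (t + (- 1 / sqrt 2) * r) \<partial>lborel)"
        by (simp add: mult.assoc)
      also have "ennreal (sqrt 2) * ennreal (1 / sqrt 2) = 1"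
        by (simp flip: ennreal_mult)
      finally show ?thesis by simp
    qed
    also have "ennreal Mg * (ennreal (sqrt 2) * (\<integral>\<^sup>+x. K x \<partial>lborel)) \<le> ennreal Mg * (ennreal (sqrt 2) * ennreal (2 * (\<rho> powr (1-s) / (1-s))))"
      unfolding K_def by (intro mult_left_mono int_K s r) auto
    also have "\<dots> = ennreal C" unfolding C_def using Mg s
      by (simp add: ennreal_mult[symmetric] mult.assoc)
    finally show "(\<integral>\<^sup>+r. G (\<Phi> (r,p)) \<partial>N) \<le> ennreal C" .
  qed
  also have "\<dots> = ennreal C" by (simp add: S.emeasure_space_1)
  finally show ?thesis unfolding G_def C_def .
qed



lemma norm_inv_powr: "cmod ((-1)/z) powr s = cmod z powr -s"
  by (simp add: norm_divide powr_minus inverse_powr divide_inverse norm_inverse)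

lemma half_powr:
  fixes a b :: complex assumes s: "0 < s"
  shows "cmod ((1/2) * (a + b)) powr s \<le> cmod a powr s + cmod b powr s"
    and "cmod ((1/2) * (a - b)) powr s \<le> cmod a powr s + cmod b powr s"
proof -
  have m: "cmod ((1/2) * (a + b)) \<le> max (cmod a) (cmod b)" "cmod ((1/2) * (a - b)) \<le> max (cmod a) (cmod b)"
    using norm_triangle_ineq[of a b] norm_triangle_ineq4[of a b] by (auto simp: norm_mult)
  have mm: "max (cmod a) (cmod b) powr s \<le> cmod a powr s + cmod b powr s"
    by (cases "cmod a \<le> cmod b") (auto simp: max_def)
  show "cmod ((1/2) * (a + b)) powr s \<le> cmod a powr s + cmod b powr s"
    using powr_mono2[OF less_imp_le[OF s] norm_ge_zero m(1)] mm by linarith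
  show "cmod ((1/2) * (a - b)) powr s \<le> cmod a powr s + cmod b powr s"
    using powr_mono2[OF less_imp_le[OF s] norm_ge_zero m(2)] mm by linarith
qed

lemma Im_inv: "Im z \<ge> 0 \<Longrightarrow> Im ((-1)/z) \<ge> 0"
  by (simp add: Im_divide')

lemma Im_phi: "Im w \<ge> 0 \<Longrightarrow> Im (phi_plus E q w) \<ge> 0"
  using Im_inv[of "w + of_real ((E - fst q)/sqrt 2)"] Im_inv[of "w + of_real ((E - snd q)/sqrt 2)"]
  unfolding phi_plus_def by simp

lemma inv_lip:
  fixes z z' :: complex assumes "0 < \<eta>" "cmod z \<ge> \<eta>" "cmod z' \<ge> \<eta>/2"
  shows "cmod ((-1)/z - (-1)/z') \<le> 2 * cmod (z - z') / \<eta>^2"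
proof -
  have nz: "z \<noteq> 0" "z' \<noteq> 0" using assms by auto
  have "(-1)/z - (-1)/z' = (z - z') / (z * z')" using nz by (simp add: field_simps)
  then have "cmod ((-1)/z - (-1)/z') = cmod (z - z') / (cmod z * cmod z')"
    by (simp add: norm_divide norm_mult)
  also have "\<dots> \<le> cmod (z - z') / (\<eta> * (\<eta>/2))"
    using assms by (intro divide_left_mono mult_mono mult_pos_pos) auto
  finally show ?thesis by (simp add: power2_eq_square ac_simps)
qed

lemma inv_bd: "0 < \<eta> \<Longrightarrow> cmod z \<ge> \<eta> \<Longrightarrow> cmod ((-1)/z) \<le> 1/\<eta>"
  by (simp add: norm_divide divide_le_eq field_simps)

lemma Hc_P1:
  assumes s: "0 < s" and r: "0 < \<rho>"
  shows "ennreal (cmod z powr -s) \<le> Hc s \<rho> z + ennreal (\<rho> powr -s)"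
proof (cases "cmod z < \<rho>")
  case True then show ?thesis by (auto simp: Hc_def)
next
  case False
  then have "z \<noteq> 0" using r by auto
  then have "cmod z powr -s \<le> \<rho> powr -s" using False s r by (intro powr_mono2') auto
  then show ?thesis using False by (simp add: Hc_def ennreal_leI)
qed

lemma Hc_P2:
  assumes s: "0 < s" and e: "0 < \<eta>" and z: "cmod z < \<eta>"
  shows "1 \<le> ennreal (\<eta> powr s) * Hc s \<eta> z"
proof (cases "z = 0")
  case True then show ?thesis using z e by (simp add: Hc_def ennreal_mult_top)
next
  case False
  have "\<eta> powr -s \<le> cmod z powr -s" using False z s by (intro powr_mono2') auto
  then have "1 \<le> \<eta> powr s * cmod z powr -s"
    using e by (simp add: powr_minus field_simps)
  then have "ennreal 1 \<le> ennreal (\<eta> powr s * cmod z powr -s)" by (rule ennreal_leI)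
  then show ?thesis using False z by (simp add: Hc_def ennreal_mult)
qed



lemma W_bound:
  fixes a0 a1 :: real and u :: complex assumes s: "0 < s"
  shows "cmod ((1/2)*((-1)/(u + of_real a0) + (-1)/(u + of_real a1))) powr s
       + cmod ((1/2)*((-1)/(u + of_real a0) - (-1)/(u + of_real a1))) powr s
       \<le> 2 * (cmod (u + of_real a0) powr -s + cmod (u + of_real a1) powr -s)"
proof -
  have "cmod ((1/2)*((-1)/(u + of_real a0) + (-1)/(u + of_real a1))) powr s \<le> cmod ((-1)/(u + of_real a0)) powr s + cmod ((-1)/(u + of_real a1)) powr s"
       "cmod ((1/2)*((-1)/(u + of_real a0) - (-1)/(u + of_real a1))) powr s \<le> cmod ((-1)/(u + of_real a0)) powr s + cmod ((-1)/(u + of_real a1)) powr s"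
    using half_powr[OF s] by blast+
  then have "cmod ((1/2)*((-1)/(u + of_real a0) + (-1)/(u + of_real a1))) powr s
       + cmod ((1/2)*((-1)/(u + of_real a0) - (-1)/(u + of_real a1))) powr s
       \<le> (cmod ((-1)/(u + of_real a0)) powr s + cmod ((-1)/(u + of_real a1)) powr s) + (cmod ((-1)/(u + of_real a0)) powr s + cmod ((-1)/(u + of_real a1)) powr s)"
    by (rule add_mono)
  then show ?thesis unfolding norm_inv_powr by simp
qed

lemma h_le: "0 < s \<Longrightarrow> 0 < \<eta> \<Longrightarrow> cmod z \<ge> \<eta> \<Longrightarrow> cmod z powr -s \<le> \<eta> powr -s"
  by (intro powr_mono2') auto

lemma pointwise:
  fixes f :: "complex \<Rightarrow> complex" and a0 a1 :: real
  assumes s: "0 < s" and e: "0 < \<eta>" and r: "0 < \<rho>" and B: "1 \<le> B"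
    and fB: "\<forall>u\<in>cuhp. cmod (f u) \<le> B"
    and w: "w \<in> cuhp" and w': "w' \<in> cuhp" and ww: "cmod (w - w') \<le> \<eta>/2"
    and hf: "\<forall>u\<in>cuhp. \<forall>v\<in>cuhp. cmod (u - v) \<le> 2*cmod(w-w')/\<eta>^2 \<longrightarrow> cmod (f u - f v) \<le> \<epsilon>f"
    and hp: "\<forall>x\<in>{0..2/\<eta>}. \<forall>y\<in>{0..2/\<eta>}. \<bar>x - y\<bar> \<le> 2*cmod(w-w')/\<eta>^2 \<longrightarrow> \<bar>x powr s - y powr s\<bar> \<le> \<epsilon>p"
    and ef: "0 \<le> \<epsilon>f" and ep: "0 \<le> \<epsilon>p"
  assumes P_def: "P = (\<lambda>u. (1/2)*((-1)/(u + of_real a0) + (-1)/(u + of_real a1)))"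
    and Mi_def: "Mi = (\<lambda>u. (1/2)*((-1)/(u + of_real a0) - (-1)/(u + of_real a1)))"
    and F_def: "F = (\<lambda>u. f (P u) * of_real (cmod (P u) powr s + cmod (Mi u) powr s))"
  shows "ennreal (cmod (F w - F w')) \<le> ennreal (\<epsilon>f*(4*\<eta> powr -s) + 2*B*\<epsilon>p)
     + ennreal (2*B) * (Hc s \<rho> (w + of_real a0) + Hc s \<rho> (w + of_real a1) + Hc s \<rho> (w' + of_real a0) + Hc s \<rho> (w' + of_real a1))
     + ennreal (8*B*\<rho> powr -s*\<eta> powr s) * (Hc s \<eta> (w + of_real a0) + Hc s \<eta> (w + of_real a1))"
proof -
  define W where "W u = cmod (P u) powr s + cmod (Mi u) powr s" for u
  define h where "h z = cmod z powr -s" for z :: complex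
  have h0: "0 \<le> h z" for z unfolding h_def by simp
  have W0: "0 \<le> W u" for u unfolding W_def by simp
  have Wb: "W u \<le> 2 * (h (u + of_real a0) + h (u + of_real a1))" for u
    unfolding W_def h_def P_def Mi_def by (rule W_bound[OF s])
  have Pc: "P u \<in> cuhp" if "u \<in> cuhp" for u
  proof -
    have "Im (P u) = Im (phi_plus 0 (- sqrt 2 * a0, - sqrt 2 * a1) u)"
      unfolding P_def phi_plus_def by simp
    also have "\<dots> \<ge> 0" using that by (intro Im_phi) (simp add: cuhp_def)
    finally show ?thesis by (simp add: cuhp_def)
  qed
  have Fb: "cmod (F u) \<le> B * W u" if "u \<in> cuhp" for u
  proof -
    have "cmod (F u) = cmod (f (P u)) * W u"
      unfolding F_def W_def[symmetric] using W0[of u] by (simp add: norm_mult)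
    also have "\<dots> \<le> B * W u" using fB Pc[OF that] W0[of u] by (intro mult_right_mono) auto
    finally show ?thesis .
  qed
  show ?thesis
  proof (cases "cmod (w + of_real a0) \<ge> \<eta> \<and> cmod (w + of_real a1) \<ge> \<eta>")
    case True
    define d where "d = cmod (w - w')"
    have z': "cmod (w' + of_real a) \<ge> \<eta>/2" if "cmod (w + of_real a) \<ge> \<eta>" for a
      using norm_triangle_ineq2[of "w + of_real a" "w' + of_real a"] that ww by (simp add: norm_minus_commute)
    have lip: "cmod ((-1)/(w + of_real a) - (-1)/(w' + of_real a)) \<le> 2 * d / \<eta>^2"
      if "cmod (w + of_real a) \<ge> \<eta>" for a
      using inv_lip[OF e that z'[OF that]] by (simp add: d_def)
    have bw: "cmod ((-1)/(w + of_real a)) \<le> 2/\<eta>" if "cmod (w + of_real a) \<ge> \<eta>" for a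
      using inv_bd[OF e that] e by (simp add: field_simps)
    have bw': "cmod ((-1)/(w' + of_real a)) \<le> 2/\<eta>" if "cmod (w + of_real a) \<ge> \<eta>" for a
      using inv_bd[of "\<eta>/2", OF _ z'[OF that]] e by simp
    have dP: "cmod (P w - P w') \<le> 2 * d / \<eta>^2"
    proof -
      define X0 where "X0 = (-1)/(w + of_real a0) - (-1)/(w' + of_real a0)"
      define X1 where "X1 = (-1)/(w + of_real a1) - (-1)/(w' + of_real a1)"
      have "P w - P w' = (1/2) * (X0 + X1)"
        unfolding P_def X0_def X1_def by (simp add: algebra_simps)
      then have "cmod (P w - P w') = cmod ((1/2) * (X0 + X1))" by (simp only:)
      also have "\<dots> = (1/2) * cmod (X0 + X1)" by (simp only: norm_mult) simp
      finally have "cmod (P w - P w') = (1/2) * cmod (X0 + X1)" .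
      moreover have "cmod (X0 + X1) \<le> cmod X0 + cmod X1" by (rule norm_triangle_ineq)
      moreover have "cmod X0 \<le> 2 * d / \<eta>^2" "cmod X1 \<le> 2 * d / \<eta>^2"
        unfolding X0_def X1_def using lip True by auto
      ultimately show ?thesis by linarith
    qed
    have dM: "cmod (Mi w - Mi w') \<le> 2 * d / \<eta>^2"
    proof -
      define X0 where "X0 = (-1)/(w + of_real a0) - (-1)/(w' + of_real a0)"
      define X1 where "X1 = (-1)/(w + of_real a1) - (-1)/(w' + of_real a1)"
      have "Mi w - Mi w' = (1/2) * (X0 - X1)"
        unfolding Mi_def X0_def X1_def by (simp add: algebra_simps)
      then have "cmod (Mi w - Mi w') = cmod ((1/2) * (X0 - X1))" by (simp only:)
      also have "\<dots> = (1/2) * cmod (X0 - X1)" by (simp only: norm_mult) simp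
      finally have "cmod (Mi w - Mi w') = (1/2) * cmod (X0 - X1)" .
      moreover have "cmod (X0 - X1) \<le> cmod X0 + cmod X1" by (rule norm_triangle_ineq4)
      moreover have "cmod X0 \<le> 2 * d / \<eta>^2" "cmod X1 \<le> 2 * d / \<eta>^2"
        unfolding X0_def X1_def using lip True by auto
      ultimately show ?thesis by linarith
    qed
    have bP: "cmod (P w) \<le> 2/\<eta>" "cmod (P w') \<le> 2/\<eta>" "cmod (Mi w) \<le> 2/\<eta>" "cmod (Mi w') \<le> 2/\<eta>"
      unfolding P_def Mi_def
      using bw[of a0] bw[of a1] bw'[of a0] bw'[of a1] True
        norm_triangle_ineq[of "(-1)/(w + of_real a0)" "(-1)/(w + of_real a1)"]
        norm_triangle_ineq[of "(-1)/(w' + of_real a0)" "(-1)/(w' + of_real a1)"]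
        norm_triangle_ineq4[of "(-1)/(w + of_real a0)" "(-1)/(w + of_real a1)"]
        norm_triangle_ineq4[of "(-1)/(w' + of_real a0)" "(-1)/(w' + of_real a1)"]
      by (simp_all add: norm_mult)
    have e1: "cmod (f (P w) - f (P w')) \<le> \<epsilon>f"
      using hf Pc[OF w] Pc[OF w'] dP by (simp add: d_def)
    have e2: "\<bar>cmod (P w) powr s - cmod (P w') powr s\<bar> \<le> \<epsilon>p"
      using hp bP e norm_triangle_ineq3[of "P w" "P w'"] dP by (auto simp: d_def)
    have e3: "\<bar>cmod (Mi w) powr s - cmod (Mi w') powr s\<bar> \<le> \<epsilon>p"
      using hp bP e norm_triangle_ineq3[of "Mi w" "Mi w'"] dM by (auto simp: d_def)
    have dW: "\<bar>W w - W w'\<bar> \<le> 2 * \<epsilon>p" using e2 e3 unfolding W_def by linarith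
    have Ww: "W w \<le> 4 * \<eta> powr -s"
      using Wb[of w] h_le[OF s e conjunct1[OF True]] h_le[OF s e conjunct2[OF True]]
      unfolding h_def by (smt (verit))
    have "F w - F w' = (f (P w) - f (P w')) * of_real (W w) + f (P w') * of_real (W w - W w')"
      unfolding F_def W_def by (simp add: algebra_simps)
    then have "cmod (F w - F w') \<le> cmod (f (P w) - f (P w')) * W w + cmod (f (P w')) * \<bar>W w - W w'\<bar>"
      using norm_triangle_ineq[of "(f (P w) - f (P w')) * of_real (W w)" "f (P w') * of_real (W w - W w')"] W0[of w]
      by (simp add: norm_mult del: of_real_diff)
    also have "\<dots> \<le> \<epsilon>f * (4 * \<eta> powr -s) + B * (2 * \<epsilon>p)"
      using fB Pc[OF w'] e1 dW Ww W0[of w] ef B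
      by (intro add_mono mult_mono) auto
    finally have "cmod (F w - F w') \<le> \<epsilon>f*(4*\<eta> powr -s) + 2*B*\<epsilon>p" by simp
    then have "ennreal (cmod (F w - F w')) \<le> ennreal (\<epsilon>f*(4*\<eta> powr -s) + 2*B*\<epsilon>p)"
      by (rule ennreal_leI)
    then show ?thesis by (rule order.trans) (simp add: add.assoc)
  next
    case False
    note bad = False
    define S where "S = Hc s \<rho> (w + of_real a0) + Hc s \<rho> (w + of_real a1) + Hc s \<rho> (w' + of_real a0) + Hc s \<rho> (w' + of_real a1)"
    define T where "T = Hc s \<eta> (w + of_real a0) + Hc s \<eta> (w + of_real a1)"
    have "cmod (F w - F w') \<le> cmod (F w) + cmod (F w')" by (rule norm_triangle_ineq4)
    also have "\<dots> \<le> B * W w + B * W w'" using Fb[OF w] Fb[OF w'] by linarith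
    also have "\<dots> \<le> 2 * B * (h (w + of_real a0) + h (w + of_real a1) + h (w' + of_real a0) + h (w' + of_real a1))"
    proof -
      have "B * W w \<le> B * (2 * (h (w + of_real a0) + h (w + of_real a1)))"
        using Wb[of w] B by (intro mult_left_mono) auto
      moreover have "B * W w' \<le> B * (2 * (h (w' + of_real a0) + h (w' + of_real a1)))"
        using Wb[of w'] B by (intro mult_left_mono) auto
      ultimately show ?thesis by (simp add: algebra_simps)
    qed
    finally have "ennreal (cmod (F w - F w')) \<le> ennreal (2 * B * (h (w + of_real a0) + h (w + of_real a1) + h (w' + of_real a0) + h (w' + of_real a1)))"
      by (rule ennreal_leI)
    also have "\<dots> = ennreal (2 * B) * (ennreal (h (w + of_real a0)) + ennreal (h (w + of_real a1)) + ennreal (h (w' + of_real a0)) + ennreal (h (w' + of_real a1)))"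
      using B h0 by (simp add: ennreal_mult ennreal_plus del: ennreal_plus_if)
    also have "\<dots> \<le> ennreal (2 * B) * (S + ennreal (4 * \<rho> powr -s))"
    proof (rule mult_left_mono)
      define c where "c = ennreal (\<rho> powr -s)"
      have "ennreal (h (w + of_real a0)) + ennreal (h (w + of_real a1)) + ennreal (h (w' + of_real a0)) + ennreal (h (w' + of_real a1))
         \<le> (Hc s \<rho> (w + of_real a0) + c) + (Hc s \<rho> (w + of_real a1) + c) + (Hc s \<rho> (w' + of_real a0) + c) + (Hc s \<rho> (w' + of_real a1) + c)"
        unfolding h_def c_def by (intro add_mono Hc_P1[OF s r])
      also have "\<dots> = S + (c + c + c + c)" unfolding S_def by (simp add: ac_simps)
      also have "c + c + c + c = ennreal (4 * \<rho> powr -s)"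
        unfolding c_def by (simp add: ennreal_plus[symmetric] del: ennreal_plus)
      finally show "ennreal (h (w + of_real a0)) + ennreal (h (w + of_real a1)) + ennreal (h (w' + of_real a0)) + ennreal (h (w' + of_real a1)) \<le> S + ennreal (4 * \<rho> powr -s)" .
    qed simp
    also have "\<dots> = ennreal (2 * B) * S + ennreal (8 * B * \<rho> powr -s) * 1"
      using B by (simp add: distrib_left ennreal_mult[symmetric] mult.assoc)
    also have "\<dots> \<le> ennreal (2 * B) * S + ennreal (8 * B * \<rho> powr -s) * (ennreal (\<eta> powr s) * T)"
    proof -
      have "1 \<le> ennreal (\<eta> powr s) * T"
      proof (cases "cmod (w + of_real a0) < \<eta>")
        case True
        have "ennreal (\<eta> powr s) * Hc s \<eta> (w + of_real a0) \<le> ennreal (\<eta> powr s) * T"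
          unfolding T_def by (intro mult_left_mono) auto
        then show ?thesis using Hc_P2[OF s e True] by (rule order.trans[rotated])
      next
        case False
        then have "cmod (w + of_real a1) < \<eta>" using bad False by auto
        have "ennreal (\<eta> powr s) * Hc s \<eta> (w + of_real a1) \<le> ennreal (\<eta> powr s) * T"
          unfolding T_def by (intro mult_left_mono) auto
        then show ?thesis using Hc_P2[OF s e \<open>cmod (w + of_real a1) < \<eta>\<close>] by (rule order.trans[rotated])
      qed
      then show ?thesis by (intro add_left_mono mult_left_mono) auto
    qed
    also have "\<dots> = ennreal (2 * B) * S + ennreal (8*B*\<rho> powr -s*\<eta> powr s) * T"
      using B by (simp add: ennreal_mult mult.assoc)
    finally have X: "ennreal (cmod (F w - F w')) \<le> ennreal (2 * B) * S + ennreal (8*B*\<rho> powr -s*\<eta> powr s) * T" .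
    have Y: "ennreal (2 * B) * S \<le> ennreal (\<epsilon>f*(4*\<eta> powr -s) + 2*B*\<epsilon>p) + ennreal (2 * B) * S"
      by (rule add_increasing) auto
    show ?thesis unfolding S_def[symmetric] T_def[symmetric]
      using order.trans[OF X add_right_mono[OF Y]] .
  qed
qed



lemma Phi_meas:
  assumes sigma_sets: "sets \<sigma> = sets (borel :: (real \<times> real) measure)"
  shows "(\<lambda>(r::real, p::real\<times>real). (r + \<kappa> * fst p, r + \<kappa> * snd p))
     \<in> measurable (density lborel (\<lambda>r. ennreal (g r)) \<Otimes>\<^sub>M \<sigma>) borel"
proof -
  have sN: "sets (density lborel (\<lambda>r. ennreal (g r)) \<Otimes>\<^sub>M \<sigma>) = sets (borel \<Otimes>\<^sub>M (borel :: (real\<times>real) measure))"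
    by (rule sets_pair_measure_cong) (auto simp: sigma_sets)
  show ?thesis
    unfolding measurable_cong_sets[OF sN refl] borel_prod
    by (intro borel_measurable_continuous_onI) (auto simp: case_prod_beta intro!: continuous_intros)
qed

lemma mu_prob:
  assumes nu_prob: "prob_space (density lborel (\<lambda>r. ennreal (g r)))"
    and sigma_prob: "prob_space \<sigma>"
    and sigma_sets: "sets \<sigma> = sets (borel :: (real \<times> real) measure)"
  shows "prob_space (mu_law g \<sigma> \<kappa>)"
proof -
  interpret N: prob_space "density lborel (\<lambda>r. ennreal (g r))" by (rule nu_prob)
  interpret S: prob_space \<sigma> by (rule sigma_prob)
  interpret P: pair_prob_space "density lborel (\<lambda>r. ennreal (g r))" \<sigma> ..
  show ?thesis unfolding mu_law_def
    by (rule P.prob_space_distr[OF Phi_meas[OF sigma_sets]])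
qed

lemma F_meas:
  fixes f :: "complex \<Rightarrow> complex"
  assumes fc: "continuous_on cuhp f" and w: "Im w \<ge> 0"
  shows "(\<lambda>q. f (phi_plus E q w) * of_real (cmod (phi_plus E q w) powr s + cmod (phi_minus E q w) powr s))
          \<in> borel_measurable borel"
proof -
  define pr where "pr z = of_real (Re z) + \<i> * of_real (max (Im z) 0)" for z :: complex
  have prc: "continuous_on UNIV pr" unfolding pr_def by (intro continuous_intros)
  have prin: "pr z \<in> cuhp" for z unfolding pr_def cuhp_def by simp
  have fec: "continuous_on UNIV (\<lambda>z. f (pr z))"
    by (rule continuous_on_compose2[OF fc prc]) (auto simp: prin)
  have fem[measurable]: "(\<lambda>z. f (pr z)) \<in> borel_measurable borel"
    by (rule borel_measurable_continuous_onI[OF fec])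
  have eq: "f (phi_plus E q w) = f (pr (phi_plus E q w))" for q
  proof -
    have "Im (phi_plus E q w) \<ge> 0" by (rule Im_phi[OF w])
    then have "pr (phi_plus E q w) = phi_plus E q w"
      unfolding pr_def by (simp add: complex_eq_iff)
    then show ?thesis by simp
  qed
  have [measurable]: "fst \<in> borel_measurable (borel::(real\<times>real) measure)"
    "snd \<in> borel_measurable (borel::(real\<times>real) measure)"
    by (intro borel_measurable_continuous_onI continuous_intros)+
  show ?thesis unfolding eq unfolding phi_plus_def phi_minus_def by measurable
qed



lemma int_lin:
  assumes M: "prob_space M"
    and [measurable]: "f1 \<in> borel_measurable M" "f2 \<in> borel_measurable M" "f3 \<in> borel_measurable M" "f4 \<in> borel_measurable M"
      "g1 \<in> borel_measurable M" "g2 \<in> borel_measurable M"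
    and i: "integral\<^sup>N M f1 \<le> ennreal X" "integral\<^sup>N M f2 \<le> ennreal X" "integral\<^sup>N M f3 \<le> ennreal X" "integral\<^sup>N M f4 \<le> ennreal X"
      "integral\<^sup>N M g1 \<le> ennreal Y" "integral\<^sup>N M g2 \<le> ennreal Y"
    and X: "0 \<le> X" and Y: "0 \<le> Y" and a: "0 \<le> a" and b: "0 \<le> b" and c: "0 \<le> c"
  shows "(\<integral>\<^sup>+q. ennreal a + ennreal b * (f1 q + f2 q + f3 q + f4 q) + ennreal c * (g1 q + g2 q) \<partial>M)
     \<le> ennreal (a + b*(4*X) + c*(2*Y))"
proof -
  have e: "(\<integral>\<^sup>+q. ennreal a + ennreal b * (f1 q + f2 q + f3 q + f4 q) + ennreal c * (g1 q + g2 q) \<partial>M)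
     = ennreal a + ennreal b * (integral\<^sup>N M f1 + integral\<^sup>N M f2 + integral\<^sup>N M f3 + integral\<^sup>N M f4)
        + ennreal c * (integral\<^sup>N M g1 + integral\<^sup>N M g2)"
    using M by (simp add: nn_integral_add nn_integral_cmult prob_space.emeasure_space_1)
  also have "\<dots> \<le> ennreal a + ennreal b * (ennreal X + ennreal X + ennreal X + ennreal X) + ennreal c * (ennreal Y + ennreal Y)"
    using i by (intro add_mono mult_left_mono order_refl) auto
  also have "\<dots> = ennreal (a + b*(4*X) + c*(2*Y))"
    using X Y a b c by (simp add: ennreal_plus[symmetric] ennreal_mult[symmetric] del: ennreal_plus)
  finally show ?thesis .
qed

lemma int_bnd:
  assumes M: "prob_space M"
    and [measurable]: "f1 \<in> borel_measurable M" "f2 \<in> borel_measurable M"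
    and i: "integral\<^sup>N M f1 \<le> ennreal X" "integral\<^sup>N M f2 \<le> ennreal X"
    and X: "0 \<le> X" and b: "0 \<le> b"
  shows "(\<integral>\<^sup>+q. ennreal b * ((f1 q + 1) + (f2 q + 1)) \<partial>M) \<le> ennreal (b*(2*X + 2))"
proof -
  have e: "(\<integral>\<^sup>+q. ennreal b * ((f1 q + 1) + (f2 q + 1)) \<partial>M) = ennreal b * ((integral\<^sup>N M f1 + 1) + (integral\<^sup>N M f2 + 1))"
    using M by (simp add: nn_integral_add nn_integral_cmult prob_space.emeasure_space_1)
  also have "\<dots> \<le> ennreal b * ((ennreal X + 1) + (ennreal X + 1))"
    using i by (intro add_mono mult_left_mono order_refl) auto
  also have "ennreal X + 1 = ennreal (X + 1)" using X by simp
  also have "ennreal (X + 1) + ennreal (X + 1) = ennreal (2*X + 2)"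
    using X by (simp add: ennreal_plus[symmetric] del: ennreal_plus)
  also have "ennreal b * ennreal (2*X + 2) = ennreal (b*(2*X + 2))"
    using X b by (simp add: ennreal_mult)
  finally show ?thesis .
qed

lemma bnd_pt:
  fixes f :: "complex \<Rightarrow> complex" and a0 a1 :: real
  assumes s: "0 < s" and B: "1 \<le> B"
    and fB: "\<forall>u\<in>cuhp. cmod (f u) \<le> B"
    and w: "w \<in> cuhp"
  assumes P_def: "P = (\<lambda>u. (1/2)*((-1)/(u + of_real a0) + (-1)/(u + of_real a1)))"
    and Mi_def: "Mi = (\<lambda>u. (1/2)*((-1)/(u + of_real a0) - (-1)/(u + of_real a1)))"
    and F_def: "F = (\<lambda>u. f (P u) * of_real (cmod (P u) powr s + cmod (Mi u) powr s))"
  shows "ennreal (cmod (F w)) \<le> ennreal (2*B) * ((Hc s 1 (w + of_real a0) + 1) + (Hc s 1 (w + of_real a1) + 1))"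
proof -
  define W where "W u = cmod (P u) powr s + cmod (Mi u) powr s" for u
  define h where "h z = cmod z powr -s" for z :: complex
  have h0: "0 \<le> h z" for z unfolding h_def by simp
  have W0: "0 \<le> W u" for u unfolding W_def by simp
  have Wb: "W u \<le> 2 * (h (u + of_real a0) + h (u + of_real a1))" for u
    unfolding W_def h_def P_def Mi_def by (rule W_bound[OF s])
  have Pc: "P w \<in> cuhp"
  proof -
    have "Im (P w) = Im (phi_plus 0 (- sqrt 2 * a0, - sqrt 2 * a1) w)"
      unfolding P_def phi_plus_def by simp
    also have "\<dots> \<ge> 0" using w by (intro Im_phi) (simp add: cuhp_def)
    finally show ?thesis by (simp add: cuhp_def)
  qed
  have "cmod (F w) = cmod (f (P w)) * W w"
    unfolding F_def W_def[symmetric] using W0[of w] by (simp add: norm_mult)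
  also have "\<dots> \<le> B * W w" using fB Pc W0[of w] by (intro mult_right_mono) auto
  also have "\<dots> \<le> B * (2 * (h (w + of_real a0) + h (w + of_real a1)))"
    using Wb[of w] B by (intro mult_left_mono) auto
  finally have "ennreal (cmod (F w)) \<le> ennreal (2 * B * (h (w + of_real a0) + h (w + of_real a1)))"
    by (intro ennreal_leI) (simp add: algebra_simps)
  also have "\<dots> = ennreal (2 * B) * (ennreal (h (w + of_real a0)) + ennreal (h (w + of_real a1)))"
    using B h0 by (simp add: ennreal_mult ennreal_plus del: ennreal_plus_if)
  also have "\<dots> \<le> ennreal (2 * B) * ((Hc s 1 (w + of_real a0) + 1) + (Hc s 1 (w + of_real a1) + 1))"
    unfolding h_def using Hc_P1[OF s zero_less_one] by (intro mult_left_mono add_mono) auto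
  finally show ?thesis .
qed



theorem lemma7p1:
  fixes g :: "real \<Rightarrow> real" and K :: real and \<sigma> :: "(real \<times> real) measure"
    and s :: real and J :: "'a set" and f :: "'a \<Rightarrow> complex \<Rightarrow> complex"
  assumes g_meas: "g \<in> borel_measurable borel"
    and g_nonneg: "\<And>x. g x \<ge> 0"
    and g_bdd: "\<exists>M. \<forall>x. g x \<le> M"
    and g_supp: "\<And>x. x \<notin> {-K..K} \<Longrightarrow> g x = 0"
    and nu_prob: "prob_space (density lborel (\<lambda>r. ennreal (g r)))"
    and sigma_prob: "prob_space \<sigma>"
    and sigma_sets: "sets \<sigma> = sets (borel :: (real \<times> real) measure)"
    and sigma_supp: "emeasure \<sigma> (UNIV - {-1..1} \<times> {-1..1}) = 0"
    and s_pos: "0 < s" and s_lt: "s < 1/2"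
    and f_C: "\<And>\<alpha>. \<alpha> \<in> J \<Longrightarrow> in_C_cuhp (f \<alpha>)"
    and f_bdd: "\<exists>B. \<forall>\<alpha>\<in>J. \<forall>w\<in>cuhp. cmod (f \<alpha> w) \<le> B"
    and f_equi: "\<forall>\<delta>>0. \<exists>\<delta>'>0. \<forall>\<alpha>\<in>J. \<forall>w\<in>cuhp. \<forall>w'\<in>cuhp.
                    cmod (w - w') < \<delta>' \<longrightarrow> cmod (f \<alpha> w - f \<alpha> w') < \<delta>"
  shows "(\<exists>B. \<forall>\<kappa>\<ge>0. \<forall>E. \<forall>\<alpha>\<in>J. \<forall>w\<in>cuhp. cmod (T_op g \<sigma> \<kappa> E s (f \<alpha>) w) \<le> B)
       \<and> (\<forall>\<delta>>0. \<exists>\<delta>'>0. \<forall>\<kappa>\<ge>0. \<forall>E. \<forall>\<alpha>\<in>J. \<forall>w\<in>cuhp. \<forall>w'\<in>cuhp.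
              cmod (w - w') < \<delta>' \<longrightarrow>
              cmod (T_op g \<sigma> \<kappa> E s (f \<alpha>) w - T_op g \<sigma> \<kappa> E s (f \<alpha>) w') < \<delta>)"
proof -
  have s1: "s < 1" using s_lt by simp
  obtain Mg where Mg: "\<And>x. g x \<le> Mg" using g_bdd by auto
  have Mg0: "0 \<le> Mg" using Mg[of 0] g_nonneg[of 0] by linarith
  obtain B0 where B0: "\<forall>\<alpha>\<in>J. \<forall>w\<in>cuhp. cmod (f \<alpha> w) \<le> B0" using f_bdd by auto
  define B where "B = max 1 B0"
  have B1: "1 \<le> B" unfolding B_def by simp
  have fB: "\<forall>u\<in>cuhp. cmod (f \<alpha> u) \<le> B" if "\<alpha> \<in> J" for \<alpha>
    using B0 that unfolding B_def by force
  define C where "C = Mg * sqrt 2 * 2 / (1 - s) + 1"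
  have C0: "0 < C"
  proof -
    have "0 \<le> Mg * sqrt 2 * 2 / (1 - s)" using Mg0 s1 by simp
    then show ?thesis unfolding C_def by linarith
  qed
  have [measurable]: "fst \<in> borel_measurable (borel::(real\<times>real) measure)"
    "snd \<in> borel_measurable (borel::(real\<times>real) measure)"
    by (intro borel_measurable_continuous_onI continuous_intros)+
  have sets_mu: "sets (mu_law g \<sigma> \<kappa>) = sets borel" for \<kappa> by (simp add: mu_law_def)
  have mm: "h \<in> borel_measurable (mu_law g \<sigma> \<kappa>)" if "h \<in> borel_measurable borel" for h :: "real \<times> real \<Rightarrow> ennreal" and \<kappa>
    using that measurable_cong_sets[OF sets_mu refl] by blast
  have prob: "prob_space (mu_law g \<sigma> \<kappa>)" for \<kappa>
    by (rule mu_prob[OF nu_prob sigma_prob sigma_sets])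
  have keyC: "(\<integral>\<^sup>+q. Hc s \<rho> (c + of_real ((E - sel q) / sqrt 2)) \<partial>mu_law g \<sigma> \<kappa>) \<le> ennreal (C * \<rho> powr (1-s))"
    if "0 < \<rho>" "sel = fst \<or> sel = snd" for \<rho> c E \<kappa> sel
  proof -
    have sm: "sel \<in> borel_measurable borel" using that(2) by auto
    have se: "sel (r + \<kappa> * fst p, r + \<kappa> * snd p) = r + \<kappa> * sel p" for r p using that(2) by auto
    have "(\<integral>\<^sup>+q. Hc s \<rho> (c + of_real ((E - sel q) / sqrt 2)) \<partial>mu_law g \<sigma> \<kappa>)
          \<le> ennreal (Mg * sqrt 2 * (2 * (\<rho> powr (1-s) / (1-s))))"
      by (rule key[OF g_meas g_nonneg Mg nu_prob sigma_prob sigma_sets s_pos s1 that(1) sm se])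
    also have "\<dots> \<le> ennreal (C * \<rho> powr (1-s))"
    proof (rule ennreal_leI)
      have "Mg * sqrt 2 * (2 * (\<rho> powr (1-s) / (1-s))) = (Mg * sqrt 2 * 2 / (1 - s)) * \<rho> powr (1-s)"
        by simp
      also have "\<dots> \<le> C * \<rho> powr (1-s)" unfolding C_def by (intro mult_right_mono) auto
      finally show "Mg * sqrt 2 * (2 * (\<rho> powr (1-s) / (1-s))) \<le> C * \<rho> powr (1-s)" .
    qed
    finally show ?thesis .
  qed
  have Hm: "(\<lambda>q. Hc s \<rho> (c + of_real ((E - sel q) / sqrt 2))) \<in> borel_measurable (mu_law g \<sigma> \<kappa>)"
    if "sel = fst \<or> sel = snd" for \<rho> c E \<kappa> sel
  proof -
    have [measurable]: "sel \<in> borel_measurable borel" using that by auto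
    show ?thesis by (rule mm) measurable
  qed
  define FF where "FF \<kappa> E \<alpha> w q = f \<alpha> (phi_plus E q w) * of_real (cmod (phi_plus E q w) powr s + cmod (phi_minus E q w) powr s)"
    for \<kappa> :: real and E \<alpha> w q
  have Top: "T_op g \<sigma> \<kappa> E s (f \<alpha>) w = integral\<^sup>L (mu_law g \<sigma> \<kappa>) (FF \<kappa> E \<alpha> w)" for \<kappa> E \<alpha> w
    unfolding T_op_def FF_def ..
  have Pe: "phi_plus E q = (\<lambda>u. (1/2)*((-1)/(u + of_real ((E - fst q) / sqrt 2)) + (-1)/(u + of_real ((E - snd q) / sqrt 2))))"
    "phi_minus E q = (\<lambda>u. (1/2)*((-1)/(u + of_real ((E - fst q) / sqrt 2)) - (-1)/(u + of_real ((E - snd q) / sqrt 2))))"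
    for E q by (simp_all add: fun_eq_iff phi_plus_def phi_minus_def)
  have FFm: "FF \<kappa> E \<alpha> w \<in> borel_measurable (mu_law g \<sigma> \<kappa>)" if "\<alpha> \<in> J" "w \<in> cuhp" for \<kappa> E \<alpha> w
  proof -
    have "continuous_on cuhp (f \<alpha>)" using f_C[OF that(1)] by (simp add: in_C_cuhp_def)
    from F_meas[OF this, of w E s] that(2)
    have "FF \<kappa> E \<alpha> w \<in> borel_measurable borel" unfolding FF_def by (simp add: cuhp_def)
    then show ?thesis using measurable_cong_sets[OF sets_mu refl] by blast
  qed
  define B1' where "B1' = 2*B*(2*C + 2)"
  have bnd: "(\<integral>\<^sup>+q. ennreal (cmod (FF \<kappa> E \<alpha> w q)) \<partial>mu_law g \<sigma> \<kappa>) \<le> ennreal B1'"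
    if "\<alpha> \<in> J" "w \<in> cuhp" for \<kappa> E \<alpha> w
  proof -
    have "(\<integral>\<^sup>+q. ennreal (cmod (FF \<kappa> E \<alpha> w q)) \<partial>mu_law g \<sigma> \<kappa>)
       \<le> (\<integral>\<^sup>+q. ennreal (2*B) * ((Hc s 1 (w + of_real ((E - fst q) / sqrt 2)) + 1) + (Hc s 1 (w + of_real ((E - snd q) / sqrt 2)) + 1)) \<partial>mu_law g \<sigma> \<kappa>)"
    proof (rule nn_integral_mono)
      fix q
      show "ennreal (cmod (FF \<kappa> E \<alpha> w q)) \<le> ennreal (2*B) * ((Hc s 1 (w + of_real ((E - fst q) / sqrt 2)) + 1) + (Hc s 1 (w + of_real ((E - snd q) / sqrt 2)) + 1))"
        using bnd_pt[OF s_pos B1 fB[OF that(1)] that(2) Pe(1)[of E q] Pe(2)[of E q] refl]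
        unfolding FF_def Pe by simp
    qed
    also have "\<dots> \<le> ennreal (2*B*(2*C + 2))"
    proof -
      have i1: "(\<integral>\<^sup>+q. Hc s 1 (w + of_real ((E - fst q) / sqrt 2)) \<partial>mu_law g \<sigma> \<kappa>) \<le> ennreal C"
        using keyC[where \<rho>=1 and sel=fst and c=w and E=E and \<kappa>=\<kappa>] by simp
      have i2: "(\<integral>\<^sup>+q. Hc s 1 (w + of_real ((E - snd q) / sqrt 2)) \<partial>mu_law g \<sigma> \<kappa>) \<le> ennreal C"
        using keyC[where \<rho>=1 and sel=snd and c=w and E=E and \<kappa>=\<kappa>] by simp
      show ?thesis
        by (rule int_bnd[OF prob Hm Hm i1 i2]) (use C0 B1 in auto)
    qed
    finally show ?thesis unfolding B1'_def .
  qed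
  have integ: "integrable (mu_law g \<sigma> \<kappa>) (FF \<kappa> E \<alpha> w)" if "\<alpha> \<in> J" "w \<in> cuhp" for \<kappa> E \<alpha> w
  proof (rule integrableI_bounded)
    show "FF \<kappa> E \<alpha> w \<in> borel_measurable (mu_law g \<sigma> \<kappa>)" by (rule FFm[OF that])
    show "(\<integral>\<^sup>+x. ennreal (norm (FF \<kappa> E \<alpha> w x)) \<partial>mu_law g \<sigma> \<kappa>) < \<infinity>"
      using bnd[OF that, of \<kappa> E] by (simp add: le_less_trans)
  qed
  have part1: "\<forall>\<kappa>\<ge>0. \<forall>E. \<forall>\<alpha>\<in>J. \<forall>w\<in>cuhp. cmod (T_op g \<sigma> \<kappa> E s (f \<alpha>) w) \<le> B1'"
  proof (intro allI impI ballI)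
    fix \<kappa> E \<alpha> w assume "\<alpha> \<in> J" "w \<in> cuhp"
    have "ennreal (cmod (T_op g \<sigma> \<kappa> E s (f \<alpha>) w)) \<le> ennreal B1'"
      unfolding Top using integral_norm_bound_ennreal[OF integ[OF \<open>\<alpha> \<in> J\<close> \<open>w \<in> cuhp\<close>]] bnd[OF \<open>\<alpha> \<in> J\<close> \<open>w \<in> cuhp\<close>]
      by (rule order.trans)
    then show "cmod (T_op g \<sigma> \<kappa> E s (f \<alpha>) w) \<le> B1'" using B1 C0 unfolding B1'_def
      by (subst (asm) ennreal_le_iff) auto
  qed
  have part2: "\<forall>\<delta>>0. \<exists>\<delta>'>0. \<forall>\<kappa>\<ge>0. \<forall>E. \<forall>\<alpha>\<in>J. \<forall>w\<in>cuhp. \<forall>w'\<in>cuhp.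
              cmod (w - w') < \<delta>' \<longrightarrow>
              cmod (T_op g \<sigma> \<kappa> E s (f \<alpha>) w - T_op g \<sigma> \<kappa> E s (f \<alpha>) w') < \<delta>"
  proof (intro allI impI)
    fix \<delta> :: real assume \<delta>: "0 < \<delta>"
    have BC: "0 < B * C" using B1 C0 by simp
    define \<rho> where "\<rho> = (\<delta>/(32*B*C)) powr (1/(1-s))"
    have \<rho>0: "0 < \<rho>" unfolding \<rho>_def using \<delta> B1 C0 by simp
    have \<rho>C: "C * \<rho> powr (1-s) = \<delta>/(32*B)"
    proof -
      have "\<rho> powr (1-s) = (\<delta>/(32*B*C)) powr ((1/(1-s)) * (1-s))"
        unfolding \<rho>_def by (rule powr_powr)
      also have "(1/(1-s)) * (1-s) = 1" using s1 by simp
      also have "(\<delta>/(32*B*C)) powr 1 = \<delta>/(32*B*C)" using \<delta> B1 C0 by simp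
      finally show ?thesis using C0 by (simp add: field_simps)
    qed
    define \<eta> where "\<eta> = \<delta> * \<rho> powr s / (64*B*C)"
    have \<eta>0: "0 < \<eta>" unfolding \<eta>_def using \<delta> B1 C0 \<rho>0 by simp
    define \<epsilon>f where "\<epsilon>f = \<delta> * \<eta> powr s / 32"
    have \<epsilon>f0: "0 < \<epsilon>f" unfolding \<epsilon>f_def using \<delta> \<eta>0 by simp
    define \<epsilon>p where "\<epsilon>p = \<delta> / (16*B)"
    have \<epsilon>p0: "0 < \<epsilon>p" unfolding \<epsilon>p_def using \<delta> B1 by simp
    obtain \<delta>f where \<delta>f: "\<delta>f > 0" "\<forall>\<alpha>\<in>J. \<forall>w\<in>cuhp. \<forall>w'\<in>cuhp. cmod (w - w') < \<delta>f \<longrightarrow> cmod (f \<alpha> w - f \<alpha> w') < \<epsilon>f"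
      using f_equi \<epsilon>f0 by blast
    have uc: "uniformly_continuous_on {0..2/\<eta>} (\<lambda>x::real. x powr s)"
      by (intro compact_uniformly_continuous continuous_on_powr') (auto simp: s_pos intro: continuous_intros)
    obtain \<delta>p where \<delta>p: "\<delta>p > 0" "\<forall>x\<in>{0..2/\<eta>}. \<forall>x'\<in>{0..2/\<eta>}. dist x' x < \<delta>p \<longrightarrow> dist (x' powr s) (x powr s) < \<epsilon>p"
      using uc \<epsilon>p0 unfolding uniformly_continuous_on_def by blast
    define \<delta>' where "\<delta>' = min (\<eta>/2) (min (\<delta>f*\<eta>^2/2) (\<delta>p*\<eta>^2/2))"
    have tot: "\<epsilon>f*(4*\<eta> powr -s) + 2*B*\<epsilon>p + 2*B*(4*(C * \<rho> powr (1-s))) + 8*B*\<rho> powr -s*\<eta> powr s*(2*(C * \<eta> powr (1-s))) = 3*\<delta>/4"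
    proof -
      have e1: "\<eta> powr s * \<eta> powr -s = 1" using \<eta>0 by (simp flip: powr_add)
      have e2: "\<eta> powr s * \<eta> powr (1-s) = \<eta>" using \<eta>0 by (simp flip: powr_add)
      have e3: "\<rho> powr -s * \<rho> powr s = 1" using \<rho>0 by (simp flip: powr_add)
      have a1: "\<epsilon>f*(4*\<eta> powr -s) = \<delta>/8" unfolding \<epsilon>f_def using e1 by (simp add: field_simps)
      have a2: "2*B*\<epsilon>p = \<delta>/8" unfolding \<epsilon>p_def using B1 by (simp add: field_simps)
      have a3: "2*B*(4*(C * \<rho> powr (1-s))) = \<delta>/4" unfolding \<rho>C using B1 by (simp add: field_simps)
      have "8*B*\<rho> powr -s*\<eta> powr s*(2*(C * \<eta> powr (1-s))) = 16*B*C*\<rho> powr -s*(\<eta> powr s * \<eta> powr (1-s))"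
        by (simp add: algebra_simps)
      also have "\<dots> = 16*B*C*\<rho> powr -s*\<eta>" unfolding e2 ..
      also have "\<dots> = \<delta>/4 * (\<rho> powr -s * \<rho> powr s)" unfolding \<eta>_def using B1 C0 by (simp add: field_simps)
      finally have a4: "8*B*\<rho> powr -s*\<eta> powr s*(2*(C * \<eta> powr (1-s))) = \<delta>/4" unfolding e3 by simp
      show ?thesis using a1 a2 a3 a4 by linarith
    qed
    show "\<exists>\<delta>'>0. \<forall>\<kappa>\<ge>0. \<forall>E. \<forall>\<alpha>\<in>J. \<forall>w\<in>cuhp. \<forall>w'\<in>cuhp.
              cmod (w - w') < \<delta>' \<longrightarrow>
              cmod (T_op g \<sigma> \<kappa> E s (f \<alpha>) w - T_op g \<sigma> \<kappa> E s (f \<alpha>) w') < \<delta>"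
    proof (intro exI[of _ \<delta>'] conjI allI impI ballI)
      show "0 < \<delta>'" unfolding \<delta>'_def using \<eta>0 \<delta>f \<delta>p by simp
      fix \<kappa> :: real and E \<alpha> w w'
      assume \<alpha>: "\<alpha> \<in> J" and w: "w \<in> cuhp" and w': "w' \<in> cuhp" and ww: "cmod (w - w') < \<delta>'"
      have d1: "2*cmod(w-w')/\<eta>^2 < \<delta>f"
      proof -
        have "cmod (w - w') < \<delta>f*\<eta>^2/2" using ww unfolding \<delta>'_def by simp
        then show ?thesis using \<eta>0 by (simp add: field_simps)
      qed
      have d2: "2*cmod(w-w')/\<eta>^2 < \<delta>p"
      proof -
        have "cmod (w - w') < \<delta>p*\<eta>^2/2" using ww unfolding \<delta>'_def by simp
        then show ?thesis using \<eta>0 by (simp add: field_simps)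
      qed
      have d3: "cmod (w - w') \<le> \<eta>/2" using ww unfolding \<delta>'_def by simp
      have hf: "\<forall>u\<in>cuhp. \<forall>v\<in>cuhp. cmod (u - v) \<le> 2*cmod(w-w')/\<eta>^2 \<longrightarrow> cmod (f \<alpha> u - f \<alpha> v) \<le> \<epsilon>f"
        using \<delta>f(2) \<alpha> d1 by (meson le_less_trans less_imp_le)
      have hp: "\<forall>x\<in>{0..2/\<eta>}. \<forall>y\<in>{0..2/\<eta>}. \<bar>x - y\<bar> \<le> 2*cmod(w-w')/\<eta>^2 \<longrightarrow> \<bar>x powr s - y powr s\<bar> \<le> \<epsilon>p"
      proof (intro ballI impI)
        fix x y :: real assume xy: "x \<in> {0..2/\<eta>}" "y \<in> {0..2/\<eta>}" "\<bar>x - y\<bar> \<le> 2*cmod(w-w')/\<eta>^2"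
        then have "dist x y < \<delta>p" using d2 by (simp add: dist_real_def)
        then have "dist (x powr s) (y powr s) < \<epsilon>p" using \<delta>p(2) xy(1,2) by blast
        then show "\<bar>x powr s - y powr s\<bar> \<le> \<epsilon>p" by (simp add: dist_real_def)
      qed
      define a where "a = \<epsilon>f*(4*\<eta> powr -s) + 2*B*\<epsilon>p"
      define b where "b = 2*B"
      define c where "c = 8*B*\<rho> powr -s*\<eta> powr s"
      define H where "H r z q sel = Hc s r (z + of_real ((E - sel q) / sqrt 2))" for r z q and sel :: "real\<times>real \<Rightarrow> real"
      have "(\<integral>\<^sup>+q. ennreal (norm (FF \<kappa> E \<alpha> w q - FF \<kappa> E \<alpha> w' q)) \<partial>mu_law g \<sigma> \<kappa>)
         \<le> (\<integral>\<^sup>+q. ennreal a + ennreal b * (H \<rho> w q fst + H \<rho> w q snd + H \<rho> w' q fst + H \<rho> w' q snd)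
                + ennreal c * (H \<eta> w q fst + H \<eta> w q snd) \<partial>mu_law g \<sigma> \<kappa>)"
      proof (rule nn_integral_mono)
        fix q
        show "ennreal (norm (FF \<kappa> E \<alpha> w q - FF \<kappa> E \<alpha> w' q)) \<le> ennreal a + ennreal b * (H \<rho> w q fst + H \<rho> w q snd + H \<rho> w' q fst + H \<rho> w' q snd)
                + ennreal c * (H \<eta> w q fst + H \<eta> w q snd)"
          using pointwise[OF s_pos \<eta>0 \<rho>0 B1 fB[OF \<alpha>] w w' d3 hf hp less_imp_le[OF \<epsilon>f0] less_imp_le[OF \<epsilon>p0] Pe(1)[of E q] Pe(2)[of E q] refl]
          unfolding FF_def Pe a_def b_def c_def H_def by (simp only:)
      qed
      also have "\<dots> \<le> ennreal (a + b*(4*(C * \<rho> powr (1-s))) + c*(2*(C * \<eta> powr (1-s))))"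
      proof -
        have m: "(\<lambda>q. H r z q sel) \<in> borel_measurable (mu_law g \<sigma> \<kappa>)" if "sel = fst \<or> sel = snd" for r z sel
          unfolding H_def using Hm[OF that] .
        have i: "integral\<^sup>N (mu_law g \<sigma> \<kappa>) (\<lambda>q. H r z q sel) \<le> ennreal (C * r powr (1-s))"
          if "0 < r" "sel = fst \<or> sel = snd" for r z sel
          unfolding H_def by (rule keyC[OF that])
        show ?thesis
          by (rule int_lin[OF prob m m m m m m i i i i i i])
             (use \<rho>0 \<eta>0 C0 B1 \<epsilon>f0 \<epsilon>p0 in \<open>simp_all add: a_def b_def c_def\<close>)
      qed
      also have "a + b*(4*(C * \<rho> powr (1-s))) + c*(2*(C * \<eta> powr (1-s))) = 3*\<delta>/4"
        unfolding a_def b_def c_def using tot by simp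
      finally have I: "(\<integral>\<^sup>+q. ennreal (norm (FF \<kappa> E \<alpha> w q - FF \<kappa> E \<alpha> w' q)) \<partial>mu_law g \<sigma> \<kappa>) \<le> ennreal (3*\<delta>/4)" .
      have "T_op g \<sigma> \<kappa> E s (f \<alpha>) w - T_op g \<sigma> \<kappa> E s (f \<alpha>) w'
           = integral\<^sup>L (mu_law g \<sigma> \<kappa>) (\<lambda>q. FF \<kappa> E \<alpha> w q - FF \<kappa> E \<alpha> w' q)"
        unfolding Top by (rule Bochner_Integration.integral_diff[OF integ[OF \<alpha> w] integ[OF \<alpha> w'], symmetric])
      then have "ennreal (cmod (T_op g \<sigma> \<kappa> E s (f \<alpha>) w - T_op g \<sigma> \<kappa> E s (f \<alpha>) w'))
          = ennreal (norm (integral\<^sup>L (mu_law g \<sigma> \<kappa>) (\<lambda>q. FF \<kappa> E \<alpha> w q - FF \<kappa> E \<alpha> w' q)))" by simp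
      also have "\<dots> \<le> (\<integral>\<^sup>+q. ennreal (norm (FF \<kappa> E \<alpha> w q - FF \<kappa> E \<alpha> w' q)) \<partial>mu_law g \<sigma> \<kappa>)"
        by (rule integral_norm_bound_ennreal[OF Bochner_Integration.integrable_diff[OF integ[OF \<alpha> w] integ[OF \<alpha> w']]])
      also note I
      finally have "ennreal (cmod (T_op g \<sigma> \<kappa> E s (f \<alpha>) w - T_op g \<sigma> \<kappa> E s (f \<alpha>) w')) \<le> ennreal (3*\<delta>/4)" .
      then have "cmod (T_op g \<sigma> \<kappa> E s (f \<alpha>) w - T_op g \<sigma> \<kappa> E s (f \<alpha>) w') \<le> 3*\<delta>/4"
        using \<delta> by (subst (asm) ennreal_le_iff) auto
      then show "cmod (T_op g \<sigma> \<kappa> E s (f \<alpha>) w - T_op g \<sigma> \<kappa> E s (f \<alpha>) w') < \<delta>" using \<delta> by linarith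
    qed
  qed
  show ?thesis using part1 part2 by blast
qed

end
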